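(* The following system $\mathsf{Q}$ is sound for $\mathcal{Q}(\mathrm{FO})$ and $\mathcal{Q}(\mathrm{QBF})$ (with lax semantics), writing $\varphi\Leftrightarrow\psi$ for $(\varphi\Rightarrow\psi)$ and $(\psi\Rightarrow\varphi)$ combined by the team-level conjunction: (Lin$\forall$) $\forall x\sim\varphi\Leftrightarrow\sim\forall x\varphi$; (F$\exists$) $\exists x\alpha\Leftrightarrow\neg\forall x\neg\alpha$ for classical $\alpha$; (D$\exists\otimes$) $\exists x(\varphi\otimes\psi)\Leftrightarrow\exists x\varphi\otimes\exists x\psi$; (E$\forall$) $\forall x\alpha\Rightarrow\, !x\,\alpha$ for classical $\alpha$; (I$\forall$) $!x\,\psi\Rightarrow\forall x\psi$; (Dis$\forall$) $\forall x(\varphi\Rightarrow\psi)\Rightarrow(\forall x\varphi\Rightarrow\forall x\psi)$; (Dis$!$) $!x(\varphi\Rightarrow\psi)\Rightarrow(!x\varphi\Rightarrow\, !x\psi)$; and the rule: from a theorem $\varphi$ infer $!x\,\varphi$.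
   Context: $\Rightarrow$ is the team-semantic material implication ($A\models\varphi\Rightarrow\psi$ iff $A\not\models\varphi$ or $A\models\psi$), $\sim$ the strong negation, $\otimes$ the splitting disjunction ($\varphi\otimes\psi := \sim(\varphi\multimap\sim\psi)$, i.e. the team splits as $S\cup U$ with $S\models\varphi$, $U\models\psi$). $\mathcal{Q}(\mathcal{L})$ is the closure of $\mathcal{L}$ under $\sim$, $\Rightarrow$, $\multimap$ and team quantifiers $\forall x$, $!x$ (shriek), with $\exists x\varphi:=\sim !x\sim\varphi$. For a structure $\mathcal{A}$ with domain $A$ and team $T$: $(\mathcal{A},T)\models\forall x\varphi$ iff the duplicating team $T[A/x]=\{s^x_a\mid s\in T,a\in A\}$ satisfies $\varphi$; $(\mathcal{A},T)\models\, !x\varphi$ iff $T[f/x]=\{s^x_a\mid s\in T,a\in f(s)\}$ satisfies $\varphi$ for every supplementing function $f:T\to\mathfrak{P}(A)\setminus\{\emptyset\}$ (lax semantics). For $\mathcal{Q}(\mathrm{QBF})$ the domain is $\{0,1\}$. *)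

theory Defs
  imports Main
begin

type_synonym var = nat

datatype 'b qf =
    Cl 'b
  | Tl "'b qf"                  (* strong (contradictory) negation ~ *)
  | Imp "'b qf" "'b qf"
  | Lolli "'b qf" "'b qf"       (* -o, dual of the splitting disjunction *)
  | TAll var "'b qf"
  | Shriek var "'b qf"          (* shriek quantifier !x (lax) *)

definition dup :: "'a set \<Rightarrow> var \<Rightarrow> (var \<Rightarrow> 'a) set \<Rightarrow> (var \<Rightarrow> 'a) set" where
  "dup A x T = {s(x := a) | s a. s \<in> T \<and> a \<in> A}"

definition supfun :: "'a set \<Rightarrow> (var \<Rightarrow> 'a) set \<Rightarrow> ((var \<Rightarrow> 'a) \<Rightarrow> 'a set) \<Rightarrow> bool" where
  "supfun A T f = (\<forall>s\<in>T. f s \<noteq> {} \<and> f s \<subseteq> A)"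

definition supp :: "var \<Rightarrow> ((var \<Rightarrow> 'a) \<Rightarrow> 'a set) \<Rightarrow> (var \<Rightarrow> 'a) set \<Rightarrow> (var \<Rightarrow> 'a) set" where
  "supp x f T = {s(x := a) | s a. s \<in> T \<and> a \<in> f s}"

text \<open>Team semantics; base formulas are flat: a team satisfies a classical
  formula iff every assignment in it does (M is the Tarskian satisfaction).\<close>

fun qsat :: "'a set \<Rightarrow> ('b \<Rightarrow> (var \<Rightarrow> 'a) \<Rightarrow> bool) \<Rightarrow> (var \<Rightarrow> 'a) set \<Rightarrow> 'b qf \<Rightarrow> bool" where
  "qsat A M T (Cl \<alpha>) = (\<forall>s\<in>T. M \<alpha> s)"
| "qsat A M T (Tl \<phi>) = (\<not> qsat A M T \<phi>)"
| "qsat A M T (Imp \<phi> \<psi>) = (qsat A M T \<phi> \<longrightarrow> qsat A M T \<psi>)"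
| "qsat A M T (Lolli \<phi> \<psi>) = (\<forall>S U. S \<union> U = T \<longrightarrow> qsat A M S \<phi> \<longrightarrow> qsat A M U \<psi>)"
| "qsat A M T (TAll x \<phi>) = qsat A M (dup A x T) \<phi>"
| "qsat A M T (Shriek x \<phi>) = (\<forall>f. supfun A T f \<longrightarrow> qsat A M (supp x f T) \<phi>)"

definition qand :: "'b qf \<Rightarrow> 'b qf \<Rightarrow> 'b qf" where
  "qand \<phi> \<psi> = Tl (Imp \<phi> (Tl \<psi>))"

definition qiff :: "'b qf \<Rightarrow> 'b qf \<Rightarrow> 'b qf" where
  "qiff \<phi> \<psi> = qand (Imp \<phi> \<psi>) (Imp \<psi> \<phi>)"

definition qex :: "var \<Rightarrow> 'b qf \<Rightarrow> 'b qf" where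
  "qex x \<phi> = Tl (Shriek x (Tl \<phi>))"

definition tensor :: "'b qf \<Rightarrow> 'b qf \<Rightarrow> 'b qf" where
  "tensor \<phi> \<psi> = Tl (Lolli \<phi> (Tl \<psi>))"

inductive Qder :: "('b \<Rightarrow> 'b) \<Rightarrow> (var \<Rightarrow> 'b \<Rightarrow> 'b) \<Rightarrow> 'b qf \<Rightarrow> bool"
  for bneg :: "'b \<Rightarrow> 'b" and ball :: "var \<Rightarrow> 'b \<Rightarrow> 'b" where
  LinAll: "Qder bneg ball (qiff (TAll x (Tl \<phi>)) (Tl (TAll x \<phi>)))"
| FEx: "Qder bneg ball (qiff (qex x (Cl \<alpha>)) (Cl (bneg (ball x (bneg \<alpha>)))))"
| DExTensor: "Qder bneg ball (qiff (qex x (tensor \<phi> \<psi>)) (tensor (qex x \<phi>) (qex x \<psi>)))"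
| EAll: "Qder bneg ball (Imp (TAll x (Cl \<alpha>)) (Shriek x (Cl \<alpha>)))"
| IAll: "Qder bneg ball (Imp (Shriek x \<psi>) (TAll x \<psi>))"
| DisAll: "Qder bneg ball (Imp (TAll x (Imp \<phi> \<psi>)) (Imp (TAll x \<phi>) (TAll x \<psi>)))"
| DisShriek: "Qder bneg ball (Imp (Shriek x (Imp \<phi> \<psi>)) (Imp (Shriek x \<phi>) (Shriek x \<psi>)))"
| Nec: "Qder bneg ball \<phi> \<Longrightarrow> Qder bneg ball (Shriek x \<phi>)"

datatype 'f trm = Var var | Fn 'f "'f trm list"

datatype ('f, 'r) fo =
    FEq "'f trm" "'f trm"
  | FRel 'r "'f trm list"
  | FNeg "('f, 'r) fo"
  | FConj "('f, 'r) fo" "('f, 'r) fo"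
  | FDisj "('f, 'r) fo" "('f, 'r) fo"
  | FEx var "('f, 'r) fo"
  | FAll var "('f, 'r) fo"

fun teval :: "('f \<Rightarrow> 'a list \<Rightarrow> 'a) \<Rightarrow> (var \<Rightarrow> 'a) \<Rightarrow> 'f trm \<Rightarrow> 'a" where
  "teval F s (Var v) = s v"
| "teval F s (Fn g ts) = F g (map (teval F s) ts)"

fun fosat :: "'a set \<Rightarrow> ('f \<Rightarrow> 'a list \<Rightarrow> 'a) \<Rightarrow> ('r \<Rightarrow> 'a list \<Rightarrow> bool)
    \<Rightarrow> ('f, 'r) fo \<Rightarrow> (var \<Rightarrow> 'a) \<Rightarrow> bool" where
  "fosat A F R (FEq t u) s = (teval F s t = teval F s u)"
| "fosat A F R (FRel r ts) s = R r (map (teval F s) ts)"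
| "fosat A F R (FNeg \<phi>) s = (\<not> fosat A F R \<phi> s)"
| "fosat A F R (FConj \<phi> \<psi>) s = (fosat A F R \<phi> s \<and> fosat A F R \<psi> s)"
| "fosat A F R (FDisj \<phi> \<psi>) s = (fosat A F R \<phi> s \<or> fosat A F R \<psi> s)"
| "fosat A F R (FEx x \<phi>) s = (\<exists>a\<in>A. fosat A F R \<phi> (s(x := a)))"
| "fosat A F R (FAll x \<phi>) s = (\<forall>a\<in>A. fosat A F R \<phi> (s(x := a)))"

definition fo_structure :: "'a set \<Rightarrow> ('f \<Rightarrow> 'a list \<Rightarrow> 'a) \<Rightarrow> bool" where
  "fo_structure A F = (A \<noteq> {} \<and> (\<forall>g xs. set xs \<subseteq> A \<longrightarrow> F g xs \<in> A))"

section \<open>Quantified Boolean formulas (domain {0,1} rendered as bool)\<close>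

datatype qbf =
    PV var
  | PNeg qbf
  | PConj qbf qbf
  | PDisj qbf qbf
  | PEx var qbf
  | PAll var qbf

fun qbfsat :: "qbf \<Rightarrow> (var \<Rightarrow> bool) \<Rightarrow> bool" where
  "qbfsat (PV v) s = s v"
| "qbfsat (PNeg \<phi>) s = (\<not> qbfsat \<phi> s)"
| "qbfsat (PConj \<phi> \<psi>) s = (qbfsat \<phi> s \<and> qbfsat \<psi> s)"
| "qbfsat (PDisj \<phi> \<psi>) s = (qbfsat \<phi> s \<or> qbfsat \<psi> s)"
| "qbfsat (PEx x \<phi>) s = (\<exists>b. qbfsat \<phi> (s(x := b)))"
| "qbfsat (PAll x \<phi>) s = (\<forall>b. qbfsat \<phi> (s(x := b)))"

end

theory Submission
  imports Defs
begin

lemma qand_sat[simp]: "qsat A M T (qand a b) = (qsat A M T a \<and> qsat A M T b)"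
  by (simp add: qand_def)

lemma qiff_sat[simp]: "qsat A M T (qiff a b) = (qsat A M T a = qsat A M T b)"
  by (auto simp: qiff_def)

lemma qex_sat[simp]: "qsat A M T (qex x a) = (\<exists>f. supfun A T f \<and> qsat A M (supp x f T) a)"
  by (simp add: qex_def)

lemma tensor_sat[simp]: "qsat A M T (tensor a b) = (\<exists>S U. S \<union> U = T \<and> qsat A M S a \<and> qsat A M U b)"
  by (auto simp: tensor_def)

lemma dex_tensor:
  "(\<exists>f. supfun A T f \<and> (\<exists>S U. S \<union> U = supp x f T \<and> P S \<and> Q U)) =
   (\<exists>T1 T2. T1 \<union> T2 = T \<and> (\<exists>f. supfun A T1 f \<and> P (supp x f T1)) \<and> (\<exists>f. supfun A T2 f \<and> Q (supp x f T2)))"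
proof
  assume "\<exists>f. supfun A T f \<and> (\<exists>S U. S \<union> U = supp x f T \<and> P S \<and> Q U)"
  then obtain f S U where f: "supfun A T f" and SU: "S \<union> U = supp x f T" "P S" "Q U" by blast
  define T1 where "T1 = {s\<in>T. \<exists>a\<in>f s. s(x:=a) \<in> S}"
  define T2 where "T2 = {s\<in>T. \<exists>a\<in>f s. s(x:=a) \<in> U}"
  define f1 where "f1 s = {a\<in>f s. s(x:=a)\<in>S}" for s
  define f2 where "f2 s = {a\<in>f s. s(x:=a)\<in>U}" for s
  have "T1 \<union> T2 = T"
  proof -
    have "s \<in> T1 \<union> T2" if "s \<in> T" for s
    proof -
      from f that obtain a where "a \<in> f s" unfolding supfun_def by blast
      then have "s(x:=a) \<in> S \<union> U" using SU(1) that unfolding supp_def by blast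
      then show ?thesis using \<open>a \<in> f s\<close> that unfolding T1_def T2_def by blast
    qed
    then show ?thesis unfolding T1_def T2_def by blast
  qed
  moreover have "supfun A T1 f1" using f unfolding supfun_def T1_def f1_def by blast
  moreover have "supp x f1 T1 = S"
  proof
    show "supp x f1 T1 \<subseteq> S" unfolding supp_def f1_def T1_def by blast
    show "S \<subseteq> supp x f1 T1"
    proof
      fix t assume "t \<in> S"
      then have "t \<in> supp x f T" using SU(1) by blast
      then obtain s a where "t = s(x:=a)" "s \<in> T" "a \<in> f s" unfolding supp_def by blast
      then show "t \<in> supp x f1 T1" using \<open>t \<in> S\<close> unfolding supp_def f1_def T1_def by blast
    qed
  qed
  moreover have "supfun A T2 f2" using f unfolding supfun_def T2_def f2_def by blast
  moreover have "supp x f2 T2 = U"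
  proof
    show "supp x f2 T2 \<subseteq> U" unfolding supp_def f2_def T2_def by blast
    show "U \<subseteq> supp x f2 T2"
    proof
      fix t assume "t \<in> U"
      then have "t \<in> supp x f T" using SU(1) by blast
      then obtain s a where "t = s(x:=a)" "s \<in> T" "a \<in> f s" unfolding supp_def by blast
      then show "t \<in> supp x f2 T2" using \<open>t \<in> U\<close> unfolding supp_def f2_def T2_def by blast
    qed
  qed
  ultimately show "\<exists>T1 T2. T1 \<union> T2 = T \<and> (\<exists>f. supfun A T1 f \<and> P (supp x f T1)) \<and> (\<exists>f. supfun A T2 f \<and> Q (supp x f T2))"
    using SU by metis
next
  assume "\<exists>T1 T2. T1 \<union> T2 = T \<and> (\<exists>f. supfun A T1 f \<and> P (supp x f T1)) \<and> (\<exists>f. supfun A T2 f \<and> Q (supp x f T2))"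
  then obtain T1 T2 f1 f2 where T: "T1 \<union> T2 = T" and f1: "supfun A T1 f1" "P (supp x f1 T1)"
    and f2: "supfun A T2 f2" "Q (supp x f2 T2)" by blast
  define f where "f s = (if s \<in> T1 then f1 s else {}) \<union> (if s \<in> T2 then f2 s else {})" for s
  have "supfun A T f" using f1(1) f2(1) T unfolding supfun_def f_def by auto
  moreover have "supp x f1 T1 \<union> supp x f2 T2 = supp x f T"
  proof
    show "supp x f1 T1 \<union> supp x f2 T2 \<subseteq> supp x f T"
      unfolding supp_def f_def using T by fastforce
    show "supp x f T \<subseteq> supp x f1 T1 \<union> supp x f2 T2"
      unfolding supp_def f_def by (auto split: if_splits)
  qed
  ultimately show "\<exists>f. supfun A T f \<and> (\<exists>S U. S \<union> U = supp x f T \<and> P S \<and> Q U)"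
    using f1(2) f2(2) by blast
qed

lemma sound:
  assumes "Qder bneg ball \<phi>" and ne: "A \<noteq> {}"
    and fex: "\<And>x \<alpha> s. M (bneg (ball x (bneg \<alpha>))) s = (\<exists>a\<in>A. M \<alpha> (s(x:=a)))"
  shows "qsat A M T \<phi>"
  using assms(1)
proof (induction arbitrary: T)
  case (LinAll x \<phi>)
  then show ?case by simp
next
  case (FEx x \<alpha>)
  have "(\<exists>f. supfun A T f \<and> (\<forall>s\<in>supp x f T. M \<alpha> s)) = (\<forall>s\<in>T. \<exists>a\<in>A. M \<alpha> (s(x:=a)))"
  proof
    assume "\<exists>f. supfun A T f \<and> (\<forall>s\<in>supp x f T. M \<alpha> s)"
    then obtain f where "supfun A T f" "\<forall>s\<in>supp x f T. M \<alpha> s" by blast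
    then show "\<forall>s\<in>T. \<exists>a\<in>A. M \<alpha> (s(x:=a))" unfolding supfun_def supp_def by blast
  next
    assume h: "\<forall>s\<in>T. \<exists>a\<in>A. M \<alpha> (s(x:=a))"
    from h obtain g where g: "\<forall>s\<in>T. g s \<in> A \<and> M \<alpha> (s(x:=g s))" by metis
    define f where "f s = {g s}" for s
    have "supfun A T f" unfolding supfun_def f_def using g by auto
    moreover have "\<forall>s\<in>supp x f T. M \<alpha> s" unfolding supp_def f_def using g by auto
    ultimately show "\<exists>f. supfun A T f \<and> (\<forall>s\<in>supp x f T. M \<alpha> s)" by blast
  qed
  then show ?case by (simp add: fex)
next
  case (DExTensor x \<phi> \<psi>)
  then show ?case using dex_tensor[of A T x "\<lambda>S. qsat A M S \<phi>" "\<lambda>U. qsat A M U \<psi>"] by simp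
next
  case (EAll x \<alpha>)
  have "supp x f T \<subseteq> dup A x T" if "supfun A T f" for f
    using that unfolding supfun_def supp_def dup_def by blast
  then show ?case by auto
next
  case (IAll x \<psi>)
  have "supfun A T (\<lambda>_. A)" using ne unfolding supfun_def by auto
  moreover have "supp x (\<lambda>_. A) T = dup A x T" unfolding supp_def dup_def by auto
  ultimately show ?case by auto
next
  case (DisAll x \<phi> \<psi>)
  then show ?case by simp
next
  case (DisShriek x \<phi> \<psi>)
  then show ?case by simp
next
  case (Nec \<phi> x)
  then show ?case by simp
qed

theorem mainTheorem9:
  shows "(\<forall>(\<phi> :: ('f, 'r) fo qf) (A :: 'a set) (F :: 'f \<Rightarrow> 'a list \<Rightarrow> 'a)
            (R :: 'r \<Rightarrow> 'a list \<Rightarrow> bool) T.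
            Qder FNeg FAll \<phi> \<longrightarrow> fo_structure A F \<longrightarrow> (\<forall>s\<in>T. \<forall>v. s v \<in> A) \<longrightarrow>
            qsat A (fosat A F R) T \<phi>)
       \<and> (\<forall>(\<phi> :: qbf qf) T. Qder PNeg PAll \<phi> \<longrightarrow> qsat (UNIV :: bool set) qbfsat T \<phi>)"
proof (intro conjI allI impI)
  fix \<phi> :: "('f, 'r) fo qf" and A :: "'a set" and F :: "'f \<Rightarrow> 'a list \<Rightarrow> 'a"
    and R :: "'r \<Rightarrow> 'a list \<Rightarrow> bool" and T
  assume "Qder FNeg FAll \<phi>" "fo_structure A F"
  then show "qsat A (fosat A F R) T \<phi>"
    by (intro sound[where bneg=FNeg and ball=FAll]) (auto simp: fo_structure_def)
next
  fix \<phi> :: "qbf qf" and T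
  assume "Qder PNeg PAll \<phi>"
  then show "qsat (UNIV :: bool set) qbfsat T \<phi>"
    by (intro sound[where bneg=PNeg and ball=PAll]) auto
qed

end
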